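(* Let $f,a_1,p,d_2\in\mathbb{C}$ with $\mathrm{Re}(f-2a_1-2d_2-2)>-1$, such that the series below is well defined (no lower parameter is a nonpositive integer), $a_1\neq0$, and the quantities below are defined and $k$ is not a nonpositive integer. Put $$h=\frac{p(f-p-1)}{a_1},\qquad k=\frac{h(1+d_2+a_1-f)}{d_2-h}.$$ Then $$ {}_{6}F_{5}\left[\begin{matrix} f-1,\ \frac{f+1}{2},\ f-p,\ p+1,\ a_1,\ d_2\\ \frac{f-1}{2},\ p,\ f-p-1,\ f-a_1,\ f-d_2\end{matrix};-1\right]=\frac{\Gamma(f-a_1)\Gamma(f-d_2)}{\Gamma(f)\Gamma(f-a_1-d_2-1)}\cdot\frac{\Gamma(k)}{\Gamma(k+1)}.$$
   Context: $(x)_n$ denotes the Pochhammer symbol: $(x)_0=1$, $(x)_n=x(x+1)\cdots(x+n-1)$ for $n\ge1$. The generalized hypergeometric function is $${}_{r+1}F_{r}\left[\begin{matrix} a_1,\dots,a_{r+1}\\ b_1,\dots,b_r\end{matrix};z\right]=\sum_{n=0}^{\infty}\frac{(a_1)_n\cdots(a_{r+1})_n}{(b_1)_n\cdots(b_r)_n\,n!}z^n ,$$ where no $b_i$ is a nonpositive integer. $\Gamma$ is Euler's gamma function. *)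

theory Defs
  imports "HOL-Analysis.Analysis"
begin

definition hypergeom :: "complex list \<Rightarrow> complex list \<Rightarrow> complex \<Rightarrow> complex" where
  "hypergeom as bs z =
     (\<Sum>n. (prod_list (map (\<lambda>a. pochhammer a n) as) /
            (prod_list (map (\<lambda>b. pochhammer b n) bs) * fact n)) * z ^ n)"

end

theory Submission
  imports Defs
begin



definition V :: "complex \<Rightarrow> complex \<Rightarrow> complex \<Rightarrow> complex \<Rightarrow> nat \<Rightarrow> complex" where
 "V a b c d k = pochhammer a k * pochhammer b k * pochhammer c k * pochhammer d k /
     (pochhammer (1+a-b) k * pochhammer (1+a-c) k * pochhammer (1+a-d) k * fact k)"

definition good :: "complex \<Rightarrow> complex \<Rightarrow> complex \<Rightarrow> complex \<Rightarrow> bool" where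
 "good a b c d \<longleftrightarrow> (\<forall>j::nat. 1+a-b+ of_nat j \<noteq> 0 \<and> 1+a-c+ of_nat j \<noteq> 0 \<and> 1+a-d+ of_nat j \<noteq> 0)"

lemma poch_nz: "(\<forall>j::nat. z + of_nat j \<noteq> 0) \<Longrightarrow> pochhammer (z::complex) k \<noteq> 0"
  by (auto simp: pochhammer_eq_0_iff)

lemma good_poch: assumes "good a b c d"
  shows "pochhammer (1+a-b) k \<noteq> 0" "pochhammer (1+a-c) k \<noteq> 0" "pochhammer (1+a-d) k \<noteq> 0"
  using assms unfolding good_def by (auto intro!: poch_nz)

lemma aux4: "((A::'a::field)*a')*(B*b')*(C*c')*(D*d') / ((E*e')*(F*f')*(G*g')*(h'*H)) = (A*B*C*D/(E*F*G*H)) * (a'*b'*c'*d'/(e'*f'*g'*h'))"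
  by (simp only: times_divide_times_eq) (simp only: ac_simps)

lemma V_Suc: assumes "good a b c d"
  shows "V a b c d (Suc k) = V a b c d k * (((a+k)*(b+k)*(c+k)*(d+k)) / ((1+a-b+k)*(1+a-c+k)*(1+a-d+k)*(k+1)))"
  unfolding V_def pochhammer_Suc fact_Suc aux4 by (simp add: add_ac)

lemma cancelD: "y \<noteq> 0 \<Longrightarrow> (v::'a::field) * (n / y) * y = v * n"
  by simp

lemma good_j: assumes "good a b c d"
  shows "1+a-b+ of_nat j \<noteq> 0" "1+a-c+ of_nat j \<noteq> 0" "1+a-d+ of_nat j \<noteq> 0"
  using assms unfolding good_def by auto

lemma V_Suc': assumes "good a b c d"
  shows "V a b c d (Suc k) * ((1+a-b+k)*(1+a-c+k)*(1+a-d+k)*(k+1)) =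
         V a b c d k * ((a+k)*(b+k)*(c+k)*(d+k))"
proof -
  note nz = good_j[OF assms, of k]
  have k1: "(of_nat (k+1)::complex) \<noteq> 0" using of_nat_neq_0 by (metis Suc_eq_plus1)
  have "(1+a-b+k)*(1+a-c+k)*(1+a-d+k)*(of_nat (k+1)) \<noteq> 0"
    using nz k1 by (simp only: mult_eq_0_iff de_Morgan_disj) blast
  from cancelD[OF this] show ?thesis unfolding V_Suc[OF assms] .
qed

definition X :: "complex \<Rightarrow> complex \<Rightarrow> complex \<Rightarrow> complex \<Rightarrow> nat \<Rightarrow> complex" where
 "X a b c d k = V a b c d k * (k*(a-b+k)*(a-c+k)*(a-d+k))"

lemma polyid: "((a::complex)+k)*(b+k)*(c+k)*(d+k) - k*(a-b+k)*(a-c+k)*(a-d+k) = (a+2*k)*((b+c+d-a)*k*(k+a)+b*c*d)"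
  by (simp add: algebra_simps)

lemma X_diff: assumes "good a b c d"
  shows "X a b c d (Suc k) - X a b c d k = V a b c d k * (a+2* of_nat k)*((b+c+d-a)* of_nat k*(of_nat k+a)+b*c*d)"
proof -
  have "X a b c d (Suc k) = V a b c d (Suc k) * ((1+a-b+k)*(1+a-c+k)*(1+a-d+k)*(k+1))"
    unfolding X_def by (simp add: algebra_simps)
  also have "\<dots> = V a b c d k * ((a+k)*(b+k)*(c+k)*(d+k))" by (rule V_Suc'[OF assms])
  finally have "X a b c d (Suc k) - X a b c d k = V a b c d k * (((a+k)*(b+k)*(c+k)*(d+k)) - k*(a-b+k)*(a-c+k)*(a-d+k))"
    unfolding X_def by (simp add: right_diff_distrib mult.assoc)
  also have "\<dots> = V a b c d k * (a+2* of_nat k)*((b+c+d-a)* of_nat k*(of_nat k+a)+b*c*d)"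
    unfolding polyid by (simp only: mult.assoc)
  finally show ?thesis .
qed

lemma gen6: fixes A :: "'a::field"
  assumes "e\<noteq>0" "f\<noteq>0" "g\<noteq>0" "E\<noteq>0" "F\<noteq>0" "G\<noteq>0" "H\<noteq>0" "s\<noteq>0" "A * t = q * A'"
  shows "A*(b*B)*(c*C)*(d*D) / ((e*E)*(f*F)*(g*G)*(s*H)) * (s*t) = A'*B*C*D/(E*F*G*H) * (q*b*c*d/(e*f*g))"
proof -
  have "A*(b*B)*(c*C)*(d*D) / ((e*E)*(f*F)*(g*G)*(s*H)) * (s*t) = (A*t)*(b*c*d*B*C*D)/(e*f*g*E*F*G*H)"
    using assms by (simp add: field_simps)
  also have "\<dots> = (q*A')*(b*c*d*B*C*D)/(e*f*g*E*F*G*H)" using assms(9) by simp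
  also have "\<dots> = A'*B*C*D/(E*F*G*H) * (q*b*c*d/(e*f*g))"
    using assms by (simp add: field_simps)
  finally show ?thesis .
qed

lemma V_shift: assumes "good a b c d"
  shows "V a b c d (Suc m) * (of_nat (Suc m) * (of_nat (Suc m) + a)) =
     V (a+2) (b+1) (c+1) (d+1) m * (a*(a+1)*b*c*d/((1+a-b)*(1+a-c)*(1+a-d)))"
proof -
  have e: "1+(a+2)-(b+1) = (1+a-b)+1" "1+(a+2)-(c+1) = (1+a-c)+1" "1+(a+2)-(d+1) = (1+a-d)+1"
    by simp_all
  have pa: "pochhammer a (Suc m) * (of_nat (Suc m) + a) = a*(a+1)*pochhammer (a+2) m"
  proof -
    have "pochhammer a (Suc m) * (of_nat (Suc m) + a) = a * (pochhammer (a+1) m * (a+1+ of_nat m))"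
      by (simp add: pochhammer_rec algebra_simps)
    also have "pochhammer (a+1) m * (a+1+ of_nat m) = pochhammer (a+1) (Suc m)"
      by (simp add: pochhammer_Suc)
    also have "\<dots> = (a+1) * pochhammer (a+2) m" by (simp add: pochhammer_rec add.assoc)
    finally show ?thesis by simp
  qed
  have n0: "pochhammer ((1+a-b)+1) m \<noteq> 0" "pochhammer ((1+a-c)+1) m \<noteq> 0" "pochhammer ((1+a-d)+1) m \<noteq> 0"
           "1+a-b \<noteq> 0" "1+a-c \<noteq> 0" "1+a-d \<noteq> 0"
  proof -
    note g = good_j[OF assms]
    have s: "(z + 1) + of_nat j = z + of_nat (Suc j)" for z :: complex and j by simp
    show "pochhammer ((1+a-b)+1) m \<noteq> 0" "pochhammer ((1+a-c)+1) m \<noteq> 0" "pochhammer ((1+a-d)+1) m \<noteq> 0"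
      by (rule poch_nz; unfold s; rule allI; rule g)+
    show "1+a-b \<noteq> 0" "1+a-c \<noteq> 0" "1+a-d \<noteq> 0" using g[of 0] by simp_all
  qed
  show ?thesis unfolding V_def e
    apply (simp only: pochhammer_rec[of "1+a-b"] pochhammer_rec[of "1+a-c"] pochhammer_rec[of "1+a-d"]
        pochhammer_rec[of b] pochhammer_rec[of c] pochhammer_rec[of d] fact_Suc)
    using n0 pa by (intro gen6) (simp_all, metis of_nat_Suc of_nat_neq_0)
qed

definition D :: "complex \<Rightarrow> complex \<Rightarrow> complex \<Rightarrow> nat \<Rightarrow> complex" where
  "D a b c N = (\<Sum>k\<le>N. (a + 2 * of_nat k) * V a b c (- of_nat N) k)"

definition P :: "complex \<Rightarrow> complex \<Rightarrow> complex \<Rightarrow> nat \<Rightarrow> complex" where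
  "P a b c N = pochhammer (1+a) N * pochhammer (1+a-b-c) N / (pochhammer (1+a-b) N * pochhammer (1+a-c) N)"

lemma genD: fixes Dv :: "'a::field"
  assumes "bb*cc*dd \<noteq> 0" "Q \<noteq> 0" "eb \<noteq> 0" "ec \<noteq> 0" "Wb \<noteq> 0" "Wc \<noteq> 0"
    "r*(K*(a2*P')) + bb*cc*dd*Dv = 0" "K = a*a1*bb*cc*dd/(eb*ec*Q)" "r = - n1" "P' = U*Z/(Wb*Wc)"
    "p1*Q = a1*a2*U" "p2 = Z*n1" "p3 = eb*Wb" "p4 = ec*Wc"
  shows "Dv = a*(p1*p2/(p3*p4))"
proof -
  have e: "(bb*cc*dd)*Dv = -(r*(K*(a2*P')))" using assms(7) by (metis add.commute add_eq_0_iff)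
  have D1: "Dv = - (r*(K*(a2*P'))) / (bb*cc*dd)" using assms(1) e by (simp add: field_simps)
  have p1: "p1 = a1*a2*U/Q" using assms(2,11) by (simp add: field_simps)
  show ?thesis unfolding D1 p1 assms(8-10) assms(12-14) using assms(1-6) by (simp add: field_simps)
qed

lemma V_zero_b: "V a 0 c d (Suc k) = 0" "V a b 0 d (Suc k) = 0"
  unfolding V_def by (simp_all add: pochhammer_rec)

lemma V_0: "V a b c d 0 = 1" unfolding V_def by simp

lemma good_shift: "good a b c d \<Longrightarrow> good (a+2) (b+1) (c+1) (d+1)"
proof -
  assume g: "good a b c d"
  have s: "1 + (a+2) - (z+1) + of_nat j = 1 + a - z + of_nat (Suc j)" for z j by simp
  show ?thesis unfolding good_def s using good_j[OF g] by blast
qed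

lemma dougall: "good a b c (- of_nat N) \<Longrightarrow> D a b c N = a * P a b c N"
proof (induction N arbitrary: a b c)
  case 0
  then show ?case unfolding D_def P_def by (simp add: V_0)
next
  case (Suc N)
  define d where "d = - (of_nat (Suc N) :: complex)"
  have g: "good a b c d" using Suc.prems d_def by simp
  have pnz: "pochhammer (1+a-b) n \<noteq> 0" "pochhammer (1+a-c) n \<noteq> 0" "pochhammer (1+a-d) n \<noteq> 0" for n
    using good_poch[OF g] by auto
  show ?case
  proof (cases "b = 0 \<or> c = 0")
    case True
    have "D a b c (Suc N) = a"
      unfolding D_def sum.atMost_Suc_shift using True by (auto simp: V_0 V_zero_b)
    moreover have "P a b c (Suc N) = 1" unfolding P_def using True pnz by auto
    ultimately show ?thesis by simp
  next
    case False
    have "d \<noteq> 0" unfolding d_def using of_nat_neq_0[of N] by (simp del: of_nat_Suc)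
    then have bcd: "b*c*d \<noteq> 0" using False by simp
    have d1: "d + 1 = - of_nat N" unfolding d_def by simp
    have g': "good (a+2) (b+1) (c+1) (- of_nat N)" using good_shift[OF g] d1 by simp
    note IH = Suc.IH[OF g']
    define K where "K = a*(a+1)*b*c*d/((1+a-b)*(1+a-c)*(1+a-d))"
    have tel: "(\<Sum>k\<le>Suc N. V a b c d k * (a+2* of_nat k)*((b+c+d-a)* of_nat k*(of_nat k+a)+b*c*d)) = 0"
    proof -
      have "(\<Sum>k\<le>Suc N. V a b c d k * (a+2* of_nat k)*((b+c+d-a)* of_nat k*(of_nat k+a)+b*c*d))
          = (\<Sum>k<Suc (Suc N). X a b c d (Suc k) - X a b c d k)"
        unfolding lessThan_Suc_atMost[symmetric] using X_diff[OF g] by simp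
      also have "\<dots> = X a b c d (Suc (Suc N)) - X a b c d 0" by (rule sum_lessThan_telescope)
      also have "X a b c d 0 = 0" unfolding X_def by simp
      also have "X a b c d (Suc (Suc N)) = 0"
      proof -
        have "pochhammer d (Suc (Suc N)) = 0" unfolding d_def pochhammer_eq_0_iff
          by (intro exI[of _ "Suc N"]) simp
        then show ?thesis unfolding X_def V_def by simp
      qed
      finally show ?thesis by simp
    qed
    have s1: "(\<Sum>k\<le>Suc N. V a b c d k * (a+2* of_nat k)*((b+c+d-a)* of_nat k*(of_nat k+a)+b*c*d))
       = (b+c+d-a) * (\<Sum>k\<le>Suc N. V a b c d k * (a+2* of_nat k) * (of_nat k*(of_nat k+a)))
         + b*c*d * D a b c (Suc N)"
    proof -
      have "(\<Sum>k\<le>Suc N. V a b c d k * (a+2* of_nat k)*((b+c+d-a)* of_nat k*(of_nat k+a)+b*c*d))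
        = (\<Sum>k\<le>Suc N. (b+c+d-a) * (V a b c d k * (a+2* of_nat k) * (of_nat k*(of_nat k+a)))
             + b*c*d * ((a + 2 * of_nat k) * V a b c d k))"
        by (rule sum.cong[OF refl]) (simp add: algebra_simps)
      also have "\<dots> = (b+c+d-a) * (\<Sum>k\<le>Suc N. V a b c d k * (a+2* of_nat k) * (of_nat k*(of_nat k+a)))
         + b*c*d * (\<Sum>k\<le>Suc N. (a + 2 * of_nat k) * V a b c d k)"
        by (simp only: sum.distrib sum_distrib_left)
      finally show ?thesis unfolding D_def d_def .
    qed
    have s2: "(\<Sum>k\<le>Suc N. V a b c d k * (a+2* of_nat k) * (of_nat k*(of_nat k+a)))
       = K * D (a+2) (b+1) (c+1) N"
    proof -
      have "(\<Sum>k\<le>Suc N. V a b c d k * (a+2* of_nat k) * (of_nat k*(of_nat k+a)))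
          = (\<Sum>m\<le>N. V a b c d (Suc m) * (a+2* of_nat (Suc m)) * (of_nat (Suc m)*(of_nat (Suc m)+a)))"
        unfolding sum.atMost_Suc_shift by simp
      also have "\<dots> = (\<Sum>m\<le>N. ((a+2) + 2 * of_nat m) * V (a+2) (b+1) (c+1) (d+1) m * K)"
      proof (rule sum.cong[OF refl])
        fix m
        have "V a b c d (Suc m) * (a+2* of_nat (Suc m)) * (of_nat (Suc m)*(of_nat (Suc m)+a))
            = (a+2* of_nat (Suc m)) * (V a b c d (Suc m) * (of_nat (Suc m)*(of_nat (Suc m)+a)))"
          by (simp only: ac_simps)
        also have "\<dots> = (a+2* of_nat (Suc m)) * (V (a+2) (b+1) (c+1) (d+1) m * K)"
          unfolding V_shift[OF g] K_def ..
        finally show "V a b c d (Suc m) * (a+2* of_nat (Suc m)) * (of_nat (Suc m)*(of_nat (Suc m)+a))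
            = ((a+2) + 2 * of_nat m) * V (a+2) (b+1) (c+1) (d+1) m * K"
          by (simp add: algebra_simps)
      qed
      also have "\<dots> = K * D (a+2) (b+1) (c+1) N"
        unfolding D_def d1[symmetric] by (simp add: sum_distrib_left ac_simps)
      finally show ?thesis .
    qed
    have main: "(b+c+d-a) * (K * ((a+2) * P (a+2) (b+1) (c+1) N)) + b*c*d * D a b c (Suc N) = 0"
      using tel s1 s2 IH by simp
    have q: "1+a-d \<noteq> 0" "1+a-b \<noteq> 0" "1+a-c \<noteq> 0" using good_j[OF g, of 0] by simp_all
    have w: "pochhammer (1+(a+2)-(b+1)) N \<noteq> 0" "pochhammer (1+(a+2)-(c+1)) N \<noteq> 0"
      using good_poch[OF good_shift[OF g]] by auto
    have p1: "pochhammer (1+a) (Suc N) * (1+a-d) = (a+1)*(a+2)*pochhammer (1+(a+2)) N"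
    proof -
      have "pochhammer (1+a) (Suc N) * (1+a-d) = (1+a) * (pochhammer (a+2) N * (a+2+ of_nat N))"
        unfolding d_def by (simp add: pochhammer_rec algebra_simps)
      also have "pochhammer (a+2) N * (a+2+ of_nat N) = (a+2) * pochhammer (1+(a+2)) N"
        by (metis pochhammer_Suc pochhammer_rec add.commute)
      finally show ?thesis by (simp add: algebra_simps)
    qed
    have p2: "pochhammer (1+a-b-c) (Suc N) = pochhammer (1+(a+2)-(b+1)-(c+1)) N * (1+a-b-c+ of_nat N)"
    proof -
      have "1+(a+2)-(b+1)-(c+1) = 1+a-b-c" by simp
      then show ?thesis by (simp only: pochhammer_Suc)
    qed
    have p3: "pochhammer (1+a-b) (Suc N) = (1+a-b) * pochhammer (1+(a+2)-(b+1)) N"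
         "pochhammer (1+a-c) (Suc N) = (1+a-c) * pochhammer (1+(a+2)-(c+1)) N"
    proof -
      have "1+(a+2)-(b+1) = 1+a-b+1" "1+(a+2)-(c+1) = 1+a-c+1" by simp_all
      then show "pochhammer (1+a-b) (Suc N) = (1+a-b) * pochhammer (1+(a+2)-(b+1)) N"
         "pochhammer (1+a-c) (Suc N) = (1+a-c) * pochhammer (1+(a+2)-(c+1)) N"
        by (simp_all add: pochhammer_rec)
    qed
    have r: "b+c+d-a = - (1+a-b-c+ of_nat N)" unfolding d_def by simp
    show ?thesis unfolding P_def
      by (rule genD[OF bcd q w main K_def r _ p1 p2 p3]) (simp add: P_def)
  qed
qed



definition rr :: "complex \<Rightarrow> nat \<Rightarrow> nat \<Rightarrow> complex" where
  "rr a N k = (-1)^k * pochhammer (- of_nat N) k / pochhammer (1 + a - (- of_nat N)) k"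

lemma rr_prod: "rr a N k = (\<Prod>j<k. (of_nat N - of_nat j) / (of_nat N + (1 + a + of_nat j)))"
proof -
  have "rr a N k = (\<Prod>j<k. (-1::complex)) * (\<Prod>j<k. - of_nat N + of_nat j) / (\<Prod>j<k. 1 + a - (- of_nat N) + of_nat j)"
    unfolding rr_def pochhammer_prod atLeast0LessThan by (simp only: prod_constant card_lessThan)
  also have "\<dots> = (\<Prod>j<k. (-1) * (- of_nat N + of_nat j) / (1 + a - (- of_nat N) + of_nat j))"
    by (simp only: prod.distrib prod_dividef)
  also have "\<dots> = (\<Prod>j<k. (of_nat N - of_nat j) / (of_nat N + (1 + a + of_nat j)))"
    by (rule prod.cong[OF refl]) (simp add: algebra_simps)
  finally show ?thesis .
qed

lemma quot_lim: "(\<lambda>N. (of_nat N + u) / (of_nat N + v :: complex)) \<longlonglongrightarrow> 1"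
proof -
  have "(\<lambda>N. (1 + u / of_nat N) / (1 + v / of_nat N)) \<longlonglongrightarrow> (1 + 0) / (1 + 0)"
    by (intro tendsto_intros lim_const_over_n) simp
  moreover have "eventually (\<lambda>N. (1 + u / of_nat N) / (1 + v / of_nat N) = (of_nat N + u) / (of_nat N + v :: complex)) sequentially"
    using eventually_gt_at_top[of 0]
  proof eventually_elim
    case (elim N)
    then have n: "(of_nat N :: complex) \<noteq> 0" by simp
    have e: "1 + u / of_nat N = (of_nat N + u) / of_nat N" "1 + v / of_nat N = (of_nat N + v) / of_nat N"
      using n by (simp_all add: field_simps)
    have g: "(x / n) / (y / n) = x / (y::complex)" if "n \<noteq> 0" for x y n
      using that by (cases "y = 0") (simp_all add: field_simps)
    show ?case unfolding e using g[OF n] .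
  qed
  ultimately show ?thesis by (simp add: tendsto_cong)
qed

lemma rr_lim: "(\<lambda>N. rr a N k) \<longlonglongrightarrow> 1"
proof -
  have "(\<lambda>N. \<Prod>j<k. (of_nat N - of_nat j) / (of_nat N + (1 + a + of_nat j))) \<longlonglongrightarrow> (\<Prod>j<k. 1)"
  proof (rule tendsto_prod)
    fix j
    show "(\<lambda>N. (of_nat N - of_nat j) / (of_nat N + (1 + a + of_nat j))) \<longlonglongrightarrow> 1"
      using quot_lim[of "- of_nat j" "1 + a + of_nat j"] by simp
  qed
  then show ?thesis unfolding rr_prod by simp
qed

lemma prod_le_2pow:
  fixes x :: "nat \<Rightarrow> real"
  assumes "\<And>j. j < k \<Longrightarrow> 0 \<le> x j \<and> x j \<le> 2 \<and> (J \<le> j \<longrightarrow> x j \<le> 1)"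
  shows "(\<Prod>j<k. x j) \<le> 2 ^ min k J"
  using assms
proof (induction k)
  case 0
  then show ?case by simp
next
  case (Suc k)
  have IH: "(\<Prod>j<k. x j) \<le> 2 ^ min k J" using Suc by simp
  have nn: "0 \<le> (\<Prod>j<k. x j)" using Suc.prems by (intro prod_nonneg) auto
  have xk: "0 \<le> x k" "x k \<le> 2" "J \<le> k \<Longrightarrow> x k \<le> 1" using Suc.prems[of k] by auto
  show ?case
  proof (cases "k < J")
    case True
    then have "min (Suc k) J = Suc (min k J)" by simp
    then show ?thesis using IH nn xk by (simp add: mult_mono' mult.commute)
  next
    case False
    then have m: "min (Suc k) J = min k J" by simp
    have "(\<Prod>j<k. x j) * x k \<le> 2 ^ min k J * 1"
      using IH nn xk False by (intro mult_mono) auto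
    then show ?thesis by (simp add: m)
  qed
qed

lemma rr_bound: "\<exists>C N0. \<forall>N\<ge>N0. \<forall>k. norm (rr a N k) \<le> C"
proof -
  define \<alpha> where "\<alpha> = Re a"
  define J where "J = nat \<lceil>\<bar>\<alpha>\<bar>\<rceil>"
  define N0 where "N0 = nat \<lceil>2 * \<bar>\<alpha>\<bar> + 2\<rceil>"
  have J: "0 \<le> \<alpha> + real j" if "J \<le> j" for j
  proof -
    have "\<bar>\<alpha>\<bar> \<le> real J" unfolding J_def by linarith
    then show ?thesis using that by linarith
  qed
  have "norm (rr a N k) \<le> 2 ^ J" if N: "N \<ge> N0" for N k
  proof (cases "k \<le> N")
    case False
    then have "rr a N k = 0" unfolding rr_prod
      by (intro prod_zero) (auto intro!: bexI[of _ N])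
    then show ?thesis by simp
  next
    case True
    have N2: "2 * \<bar>\<alpha>\<bar> + 2 \<le> real N" using N unfolding N0_def by linarith
    have "norm (rr a N k) = (\<Prod>j<k. norm ((of_nat N - of_nat j) / (of_nat N + (1 + a + of_nat j))))"
      unfolding rr_prod by (simp add: prod_norm)
    also have "\<dots> \<le> 2 ^ min k J"
    proof (rule prod_le_2pow)
      fix j assume j: "j < k"
      have nj: "norm (of_nat N - of_nat j :: complex) = real N - real j"
      proof -
        have "(of_nat N - of_nat j :: complex) = of_real (real N - real j)" by simp
        then show ?thesis using j True by (simp only: norm_of_real)
      qed
      have den: "1 + \<alpha> + real N + real j \<le> norm (of_nat N + (1 + a + of_nat j) :: complex)"
      proof -
        have "Re (of_nat N + (1 + a + of_nat j) :: complex) = 1 + \<alpha> + real N + real j"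
          unfolding \<alpha>_def by simp
        then show ?thesis using complex_Re_le_cmod[of "of_nat N + (1 + a + of_nat j)"] by simp
      qed
      have pos: "0 < 1 + \<alpha> + real N + real j" using N2 by linarith
      let ?f = "norm ((of_nat N - of_nat j) / (of_nat N + (1 + a + of_nat j)) :: complex)"
      have f: "?f \<le> (real N - real j) / (1 + \<alpha> + real N + real j)"
        unfolding norm_divide nj using pos den j True
        by (intro divide_left_mono) (auto intro!: mult_pos_pos)
      have "(real N - real j) / (1 + \<alpha> + real N + real j) \<le> 2"
        using pos N2 by (simp add: divide_le_eq)
      moreover have "J \<le> j \<longrightarrow> (real N - real j) / (1 + \<alpha> + real N + real j) \<le> 1"
        using pos J[of j] by (auto simp: divide_le_eq)
      ultimately show "0 \<le> ?f \<and> ?f \<le> 2 \<and> (J \<le> j \<longrightarrow> ?f \<le> 1)" using f by auto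
    qed
    also have "\<dots> \<le> 2 ^ J" by (intro power_increasing) auto
    finally show ?thesis .
  qed
  then show ?thesis by blast
qed



definition W :: "complex \<Rightarrow> complex \<Rightarrow> complex \<Rightarrow> nat \<Rightarrow> complex" where
 "W a b c n = pochhammer a n * pochhammer b n * pochhammer c n /
     (pochhammer (1+a-b) n * pochhammer (1+a-c) n * fact n) * (-1)^n"

lemma poch_rGs: "pochhammer z (Suc n) = rGamma_series z n * (fact n * exp (z * of_real (ln (of_nat n))))"
  unfolding rGamma_series_def by simp

lemma genW: fixes pa :: "'a::field"
  assumes "pa = ra * (F * Ea)" "pb = rb*(F*Eb)" "pc = rc*(F*Ec)" "pe = re*(F*Ee)" "pg = rg*(F*Eg)"
    "F \<noteq> 0" "re \<noteq> 0" "rg \<noteq> 0" "Ee \<noteq> 0" "Eg \<noteq> 0" "fs = s * F" "s \<noteq> 0"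
  shows "pa*pb*pc/(pe*pg*fs) = ra*rb*rc/(re*rg) * (Ea*Eb*Ec/(Ee*Eg)) / s"
  unfolding assms(1-5,11) using assms(6-10,12) by (simp add: field_simps)

lemma W_asym:
  assumes "1+a-b \<notin> \<int>\<^sub>\<le>\<^sub>0" "1+a-c \<notin> \<int>\<^sub>\<le>\<^sub>0" "n \<ge> 1"
  shows "norm (W a b c (Suc n)) =
    norm (rGamma_series a n * rGamma_series b n * rGamma_series c n /
          (rGamma_series (1+a-b) n * rGamma_series (1+a-c) n))
    * real n powr (Re (2*b+2*c-a-2)) / real (Suc n)"
proof -
  define L where "L = (of_real (ln (of_nat n)) :: complex)"
  define E where "E z = exp (z * L)" for z
  have pz: "pochhammer (z::complex) n' \<noteq> 0" if "z \<notin> \<int>\<^sub>\<le>\<^sub>0" for z n'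
    using that by (auto simp: pochhammer_eq_0_iff)
  have rnz: "rGamma_series (1+a-b) n \<noteq> 0" "rGamma_series (1+a-c) n \<noteq> 0"
    unfolding rGamma_series_def using pz[OF assms(1)] pz[OF assms(2)] by auto
  have eq: "W a b c (Suc n) = rGamma_series a n * rGamma_series b n * rGamma_series c n /
          (rGamma_series (1+a-b) n * rGamma_series (1+a-c) n) * (E a * E b * E c / (E (1+a-b) * E (1+a-c)))
          / of_nat (Suc n) * (-1)^(Suc n)"
    unfolding W_def E_def L_def
    by (subst genW[OF poch_rGs poch_rGs poch_rGs poch_rGs poch_rGs _ rnz _ _ fact_Suc]) (auto, metis of_nat_Suc of_nat_neq_0)
  have E1: "E a * E b * E c / (E (1+a-b) * E (1+a-c)) = exp ((2*b+2*c-a-2) * L)"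
    unfolding E_def by (simp add: exp_add[symmetric] exp_diff[symmetric] algebra_simps)
  have N2: "norm (exp ((2*b+2*c-a-2) * L)) = real n powr (Re (2*b+2*c-a-2))"
    unfolding L_def norm_exp_eq_Re using assms(3) by (simp add: powr_def)
  show ?thesis unfolding eq E1
    by (simp only: norm_mult norm_divide norm_power norm_minus_cancel norm_one power_one mult_1_right N2 norm_of_nat)
qed




lemma W_bound:
  assumes "1+a-b \<notin> \<int>\<^sub>\<le>\<^sub>0" "1+a-c \<notin> \<int>\<^sub>\<le>\<^sub>0"
  shows "\<exists>B>0. \<forall>n\<ge>1. norm (W a b c (Suc n)) \<le> B * real n powr (Re (2*b+2*c-a-2)) / real (Suc n)"
proof -
  let ?\<rho> = "\<lambda>n. rGamma_series a n * rGamma_series b n * rGamma_series c n /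
          (rGamma_series (1+a-b) n * rGamma_series (1+a-c) n)"
  have "?\<rho> \<longlonglongrightarrow> rGamma a * rGamma b * rGamma c / (rGamma (1+a-b) * rGamma (1+a-c))"
    using assms by (intro tendsto_intros) (auto simp: rGamma_eq_zero_iff)
  then have "Bseq ?\<rho>" by (intro convergent_imp_Bseq convergentI)
  then obtain B where B: "B > 0" "\<And>n. norm (?\<rho> n) \<le> B" by (auto elim: BseqE)
  show ?thesis
  proof (intro exI[of _ B] conjI allI impI)
    fix n :: nat assume n: "n \<ge> 1"
    show "norm (W a b c (Suc n)) \<le> B * real n powr (Re (2*b+2*c-a-2)) / real (Suc n)"
      unfolding W_asym[OF assms n] using B(2)[of n]
      by (intro divide_right_mono mult_right_mono) auto
  qed (fact B)
qed

definition T :: "complex \<Rightarrow> complex \<Rightarrow> complex \<Rightarrow> nat \<Rightarrow> complex" where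
  "T a b c n = (a + 2 * of_nat n) / a * W a b c n"

lemma T_bound:
  assumes "a \<noteq> 0" "1+a-b \<notin> \<int>\<^sub>\<le>\<^sub>0" "1+a-c \<notin> \<int>\<^sub>\<le>\<^sub>0"
  shows "\<exists>C. \<forall>n\<ge>1. norm (T a b c (Suc n)) \<le> C * real n powr (Re (2*b+2*c-a-2))"
proof -
  obtain B where B: "B > 0" "\<And>n. n \<ge> 1 \<Longrightarrow> norm (W a b c (Suc n)) \<le> B * real n powr (Re (2*b+2*c-a-2)) / real (Suc n)"
    using W_bound[OF assms(2,3)] by blast
  define e where "e = Re (2*b+2*c-a-2)"
  show ?thesis
  proof (intro exI[of _ "(norm a + 2) / norm a * B"] allI impI)
    fix n :: nat assume n: "n \<ge> 1"
    have na: "norm a > 0" using assms(1) by simp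
    have "norm (T a b c (Suc n)) = norm (a + 2 * of_nat (Suc n)) / norm a * norm (W a b c (Suc n))"
      unfolding T_def by (simp add: norm_mult norm_divide)
    also have "\<dots> \<le> (norm a + 2 * real (Suc n)) / norm a * (B * real n powr e / real (Suc n))"
    proof (intro mult_mono divide_right_mono)
      show "norm (a + 2 * of_nat (Suc n)) \<le> norm a + 2 * real (Suc n)"
        using norm_triangle_ineq[of a "2 * of_nat (Suc n)"] by (simp add: norm_mult del: of_nat_Suc)
      show "norm (W a b c (Suc n)) \<le> B * real n powr e / real (Suc n)" using B(2)[OF n] e_def by simp
    qed (use na B in auto)
    also have "\<dots> = (norm a + 2 * real (Suc n)) / real (Suc n) / norm a * B * real n powr e"
      by (simp add: field_simps)
    also have "\<dots> \<le> (norm a + 2) / norm a * B * real n powr e"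
    proof -
      have "(norm a + 2 * real (Suc n)) / real (Suc n) \<le> norm a + 2"
        using na by (simp add: divide_le_eq algebra_simps)
      then show ?thesis using na B(1)
        by (intro mult_right_mono divide_right_mono) auto
    qed
    finally show "norm (T a b c (Suc n)) \<le> (norm a + 2) / norm a * B * real n powr (Re (2*b+2*c-a-2))"
      unfolding e_def .
  qed
qed

lemma T_summable:
  assumes "a \<noteq> 0" "1+a-b \<notin> \<int>\<^sub>\<le>\<^sub>0" "1+a-c \<notin> \<int>\<^sub>\<le>\<^sub>0" "Re (a - 2*b - 2*c) > -1"
  shows "summable (\<lambda>n. norm (T a b c n))"
proof -
  obtain C where C: "\<And>n. n \<ge> 1 \<Longrightarrow> norm (T a b c (Suc n)) \<le> C * real n powr (Re (2*b+2*c-a-2))"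
    using T_bound[OF assms(1-3)] by blast
  have e: "Re (2*b+2*c-a-2) < -1" using assms(4) by simp
  have sm: "summable (\<lambda>n. C * real n powr (Re (2*b+2*c-a-2)))"
    using e by (intro summable_mult) (simp add: summable_real_powr_iff)
  have ev: "eventually (\<lambda>n. norm (norm (T a b c (Suc n))) \<le> C * real n powr (Re (2*b+2*c-a-2))) sequentially"
    using eventually_ge_at_top[of 1] by eventually_elim (simp only: real_norm_def abs_norm_cancel, erule C)
  have "summable (\<lambda>n. norm (T a b c (Suc n)))"
    by (rule summable_comparison_test_ev[OF ev sm])
  then show ?thesis using summable_Suc_iff[of "\<lambda>n. norm (T a b c n)"] by blast
qed

definition X4 :: "complex \<Rightarrow> complex \<Rightarrow> complex \<Rightarrow> nat \<Rightarrow> complex" where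
  "X4 a b c n = W a b c n * (of_nat n * (a - b + of_nat n) * (a - c + of_nat n))"

lemma gen_alg: "s \<noteq> 0 \<Longrightarrow> (B * x / s) * s * (p * n) * (q * n) = (B * p * q) * (x * n * n :: 'a::field)"
  by (simp add: field_simps)

lemma X4_lim:
  assumes "1+a-b \<notin> \<int>\<^sub>\<le>\<^sub>0" "1+a-c \<notin> \<int>\<^sub>\<le>\<^sub>0" "Re (a - 2*b - 2*c) > 0"
  shows "X4 a b c \<longlonglongrightarrow> 0"
proof -
  obtain B where B: "B > 0" "\<And>n. n \<ge> 1 \<Longrightarrow> norm (W a b c (Suc n)) \<le> B * real n powr (Re (2*b+2*c-a-2)) / real (Suc n)"
    using W_bound[OF assms(1,2)] by blast
  define e where "e = Re (2*b+2*c-a-2)"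
  define K where "K = B * (norm (a-b) + 2) * (norm (a-c) + 2)"
  have bnd: "norm (X4 a b c (Suc n)) \<le> K * real n powr (e + 2)" if n: "n \<ge> 1" for n
  proof -
    have n0: "real n > 0" using n by simp
    have t1: "norm (z + of_nat (Suc n)) \<le> (norm z + 2) * real n" for z :: complex
    proof -
      have "norm (z + of_nat (Suc n)) \<le> norm z + real (Suc n)"
        using norm_triangle_ineq[of z "of_nat (Suc n)"] by (simp del: of_nat_Suc)
      also have "\<dots> \<le> (norm z + 2) * real n"
      proof -
        have h1: "norm z * 1 \<le> norm z * real n" using n by (intro mult_left_mono) auto
        have "real n \<ge> 1" using n by simp
        then show ?thesis using h1 by (simp only: of_nat_Suc distrib_right)
      qed
      finally show ?thesis .
    qed
    have "norm (X4 a b c (Suc n)) = norm (W a b c (Suc n)) * real (Suc n) * norm (a - b + of_nat (Suc n)) * norm (a - c + of_nat (Suc n))"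
      unfolding X4_def by (simp add: norm_mult del: of_nat_Suc)
    also have "\<dots> \<le> (B * real n powr e / real (Suc n)) * real (Suc n) * ((norm (a-b) + 2) * real n) * ((norm (a-c) + 2) * real n)"
      using B(1) B(2)[OF n] t1[of "a-b"] t1[of "a-c"] unfolding e_def
      by (intro mult_mono) auto
    also have "\<dots> = K * (real n powr e * real n * real n)" unfolding K_def
      by (rule gen_alg) simp
    also have "real n powr e * real n * real n = real n powr (e + 2)"
    proof -
      have "real n powr (e + 2) = real n powr e * real n powr 2" by (rule powr_add)
      also have "real n powr 2 = real n * real n" using n0 by (simp add: power2_eq_square)
      finally show ?thesis by simp
    qed
    finally show ?thesis .
  qed
  have l0: "(\<lambda>n. K * real n powr (e + 2)) \<longlonglongrightarrow> K * 0"
    using assms(3) unfolding e_def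
    by (intro tendsto_mult tendsto_const tendsto_neg_powr filterlim_real_sequentially) auto
  have ev: "eventually (\<lambda>n. norm (X4 a b c (Suc n)) \<le> K * real n powr (e + 2)) sequentially"
    using eventually_ge_at_top[of 1] by eventually_elim (rule bnd)
  have "(\<lambda>n. X4 a b c (Suc n)) \<longlonglongrightarrow> 0"
    using l0 by (intro Lim_null_comparison[OF ev]) (simp only: mult_zero_right)
  then show ?thesis by (rule LIMSEQ_imp_Suc)
qed



lemma aux3: "((A::'a::field)*a')*(B*b')*(C*c')/((E*e')*(F*f')*(h'*H)) * (m*S) = (A*B*C/(E*F*H)*S) * (m*(a'*b'*c')/(e'*f'*h'))"
  by (simp only: times_divide_eq_left times_divide_eq_right times_divide_times_eq divide_divide_eq_left)
     (simp only: ac_simps)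

lemma W_Suc: "W a b c (Suc k) = W a b c k * (- ((a+k)*(b+k)*(c+k)) / ((1+a-b+k)*(1+a-c+k)*(k+1)))"
proof -
  have "W a b c (Suc k) = W a b c k * ((-1)*((a+k)*(b+k)*(c+k)) / ((1+a-b+k)*(1+a-c+k)*(k+1)))"
    unfolding W_def pochhammer_Suc fact_Suc power_Suc aux3 by (simp add: add_ac)
  then show ?thesis by simp
qed

lemma nonpos_nz: "z \<notin> \<int>\<^sub>\<le>\<^sub>0 \<Longrightarrow> z + of_nat j \<noteq> (0::complex)"
  by (metis add.commute add_eq_0_iff minus_of_nat_in_nonpos_Ints)

lemma polyid3: "((a::complex)+k)*(b+k)*(c+k) + k*(a-b+k)*(a-c+k) = (a+2*k)*(k*(k+a)+b*c)"
  by (simp add: algebra_simps)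

lemma X4_diff:
  assumes "a \<noteq> 0" "1+a-b \<notin> \<int>\<^sub>\<le>\<^sub>0" "1+a-c \<notin> \<int>\<^sub>\<le>\<^sub>0"
  shows "X4 a b c (Suc n) - X4 a b c n = - a * (T a b c n * (of_nat n * (of_nat n + a) + b * c))"
proof -
  have nz: "(1+a-b+ of_nat n)*(1+a-c+ of_nat n)*(of_nat n+1) \<noteq> 0"
    using nonpos_nz[OF assms(2), of n] nonpos_nz[OF assms(3), of n]
    by (simp del: of_nat_Suc) (metis of_nat_Suc of_nat_neq_0 add.commute)
  have "X4 a b c (Suc n) = W a b c (Suc n) * ((1+a-b+ of_nat n)*(1+a-c+ of_nat n)*(of_nat n+1))"
    unfolding X4_def by (simp add: algebra_simps)
  also have "\<dots> = - W a b c n * ((a+ of_nat n)*(b+ of_nat n)*(c+ of_nat n))"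
    unfolding W_Suc using nz by (simp add: field_simps)
  finally have "X4 a b c (Suc n) - X4 a b c n = - W a b c n * (((a+ of_nat n)*(b+ of_nat n)*(c+ of_nat n)) + of_nat n*(a-b+ of_nat n)*(a-c+ of_nat n))"
    unfolding X4_def by (simp add: algebra_simps)
  also have "\<dots> = - W a b c n * ((a+2* of_nat n)*(of_nat n*(of_nat n+a)+b*c))"
    unfolding polyid3 ..
  also have "\<dots> = - a * (T a b c n * (of_nat n * (of_nat n + a) + b * c))"
    unfolding T_def using assms(1) by (simp add: field_simps)
  finally show ?thesis .
qed



lemma genP: fixes pa :: "'a::field"
  assumes "pa = ra * (F * Ea)" "pb = rb*(F*Eb)" "pe = re*(F*Ee)" "pg = rg*(F*Eg)"
    "F \<noteq> 0" "re \<noteq> 0" "rg \<noteq> 0" "Ee \<noteq> 0" "Eg \<noteq> 0"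
  shows "pa*pb/(pe*pg) = ra*rb/(re*rg) * (Ea*Eb/(Ee*Eg))"
  unfolding assms(1-4) using assms(5-9) by (simp add: field_simps)

lemma P_lim:
  assumes "1+a-b \<notin> \<int>\<^sub>\<le>\<^sub>0" "1+a-c \<notin> \<int>\<^sub>\<le>\<^sub>0"
  shows "P a b c \<longlonglongrightarrow> Gamma (1+a-b) * Gamma (1+a-c) * rGamma (1+a) * rGamma (1+a-b-c)"
proof -
  have pz: "pochhammer (z::complex) n' \<noteq> 0" if "z \<notin> \<int>\<^sub>\<le>\<^sub>0" for z n'
    using that by (auto simp: pochhammer_eq_0_iff)
  let ?\<rho> = "\<lambda>n. rGamma_series (1+a) n * rGamma_series (1+a-b-c) n / (rGamma_series (1+a-b) n * rGamma_series (1+a-c) n)"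
  have eq: "P a b c (Suc n) = ?\<rho> n" for n
  proof -
    define L where "L = (of_real (ln (of_nat n)) :: complex)"
    have rnz: "rGamma_series (1+a-b) n \<noteq> 0" "rGamma_series (1+a-c) n \<noteq> 0"
      unfolding rGamma_series_def using pz[OF assms(1)] pz[OF assms(2)] by auto
    have "P a b c (Suc n) = ?\<rho> n * (exp ((1+a)*L) * exp ((1+a-b-c)*L) / (exp ((1+a-b)*L) * exp ((1+a-c)*L)))"
      unfolding P_def L_def by (rule genP[OF poch_rGs poch_rGs poch_rGs poch_rGs _ rnz]) auto
    also have "exp ((1+a)*L) * exp ((1+a-b-c)*L) / (exp ((1+a-b)*L) * exp ((1+a-c)*L)) = exp ((1+a)*L + (1+a-b-c)*L - ((1+a-b)*L + (1+a-c)*L))"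
      by (simp only: exp_add exp_diff)
    also have "(1+a)*L + (1+a-b-c)*L - ((1+a-b)*L + (1+a-c)*L) = 0" by (simp add: algebra_simps)
    finally show ?thesis by simp
  qed
  have "?\<rho> \<longlonglongrightarrow> rGamma (1+a) * rGamma (1+a-b-c) / (rGamma (1+a-b) * rGamma (1+a-c))"
    using assms by (intro tendsto_intros) (auto simp: rGamma_eq_zero_iff)
  also have "rGamma (1+a) * rGamma (1+a-b-c) / (rGamma (1+a-b) * rGamma (1+a-c)) =
      Gamma (1+a-b) * Gamma (1+a-c) * rGamma (1+a) * rGamma (1+a-b-c)"
    by (simp add: Gamma_def divide_inverse ac_simps)
  finally have "(\<lambda>n. P a b c (Suc n)) \<longlonglongrightarrow> Gamma (1+a-b) * Gamma (1+a-c) * rGamma (1+a) * rGamma (1+a-b-c)"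
    unfolding eq .
  then show ?thesis by (rule LIMSEQ_imp_Suc)
qed

lemma link_alg: fixes pa :: "'a::field"
  assumes "S*S = 1" "aa \<noteq> 0"
  shows "x * (pa*pb*pc*pd/(pe*pg*ph*F)) = aa * ((x/aa * (pa*pb*pc/(pe*pg*F) * S)) * (S * pd / ph))"
proof -
  have "aa * ((x/aa * (pa*pb*pc/(pe*pg*F) * S)) * (S * pd / ph)) = (S*S) * (x * (pa*pb*pc/(pe*pg*F))  * (pd/ph))"
    using assms(2) by (simp add: field_simps)
  also have "\<dots> = x * (pa*pb*pc*pd/(pe*pg*ph*F))" unfolding assms(1) by (simp add: field_simps)
  finally show ?thesis ..
qed

lemma link: "a \<noteq> 0 \<Longrightarrow> (a + 2 * of_nat k) * V a b c (- of_nat N) k = a * (T a b c k * rr a N k)"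
  unfolding V_def T_def W_def rr_def
  by (rule link_alg) (simp_all add: power_mult_distrib[symmetric])

lemma F43:
  assumes a0: "a \<noteq> 0" and lb: "1+a-b \<notin> \<int>\<^sub>\<le>\<^sub>0" and lc: "1+a-c \<notin> \<int>\<^sub>\<le>\<^sub>0"
    and cv: "Re (a - 2*b - 2*c) > -1"
  shows "T a b c sums (Gamma (1+a-b) * Gamma (1+a-c) * rGamma (1+a) * rGamma (1+a-b-c))"
proof -
  define G where "G = Gamma (1+a-b) * Gamma (1+a-c) * rGamma (1+a) * rGamma (1+a-b-c)"
  obtain C N0 where C: "\<And>N k. N \<ge> N0 \<Longrightarrow> norm (rr a N k) \<le> C" using rr_bound[of a] by blast
  define N1 where "N1 = max N0 (nat \<lceil>\<bar>Re a\<bar>\<rceil> + 1)"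
  have sT: "summable (\<lambda>n. norm (T a b c n))" using T_summable[OF a0 lb lc cv] .
  have good: "good a b c (- of_nat N)" if "N \<ge> N1" for N
  proof -
    have "1 + a - (- of_nat N) + of_nat j \<noteq> 0" for j
    proof
      assume h: "1 + a - (- of_nat N) + of_nat j = 0"
      have "Re (1 + a - (- of_nat N) + of_nat j) > 0"
        using that unfolding N1_def by simp linarith
      moreover have "Re (1 + a - (- of_nat N) + of_nat j) = 0" unfolding h by simp
      ultimately show False by linarith
    qed
    then show ?thesis unfolding good_def using nonpos_nz[OF lb] nonpos_nz[OF lc] by blast
  qed
  have sumeq: "suminf (\<lambda>k. T a b c k * rr a N k) = P a b c N" if "N \<ge> N1" for N
  proof -
    have z: "T a b c k * rr a N k = 0" if "k \<notin> {..N}" for k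
    proof -
      have "pochhammer (- of_nat N :: complex) k = 0" using that
        by (auto simp: pochhammer_eq_0_iff intro!: exI[of _ N])
      then show ?thesis unfolding rr_def by simp
    qed
    have "(\<lambda>k. T a b c k * rr a N k) sums (\<Sum>k\<le>N. T a b c k * rr a N k)"
      by (rule sums_finite) (use z in auto)
    moreover have "(\<Sum>k\<le>N. T a b c k * rr a N k) = D a b c N / a"
      unfolding D_def using link[OF a0] a0 by (simp add: sum_divide_distrib)
    moreover have "D a b c N = a * P a b c N" by (rule dougall[OF good[OF that]])
    ultimately show ?thesis using a0 by (simp add: sums_iff)
  qed
  have tan: "(\<lambda>N. suminf (\<lambda>k. T a b c k * rr a N k)) \<longlonglongrightarrow> suminf (\<lambda>k. T a b c k)"
  proof -
    have "((\<lambda>N. suminf (\<lambda>k. T a b c k * rr a N k)) \<longlongrightarrow> suminf (\<lambda>k. T a b c k * 1)) sequentially"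
    proof (rule tannerys_theorem[THEN conjunct2, THEN conjunct2])
      show "((\<lambda>N. T a b c k * rr a N k) \<longlongrightarrow> T a b c k * 1) sequentially" for k
        by (intro tendsto_intros rr_lim)
      have bb: "norm (T a b c k * rr a N k) \<le> C * norm (T a b c k)" if NN: "N \<ge> N0" for k N
      proof -
        have cc: "norm (rr a N k) \<le> C" using NN by (rule C)
        have "norm (rr a N k) * norm (T a b c k) \<le> C * norm (T a b c k)"
          by (rule mult_right_mono[OF cc norm_ge_zero])
        then show ?thesis by (simp add: norm_mult mult.commute)
      qed
      show "eventually (\<lambda>(k, N). norm (T a b c k * rr a N k) \<le> C * norm (T a b c k)) (at_top \<times>\<^sub>F sequentially)"
        unfolding eventually_prod_filter
        by (rule exI[of _ "\<lambda>_. True"], rule exI[of _ "\<lambda>N. N \<ge> N0"]) (auto intro: bb)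
      show "summable (\<lambda>k. C * norm (T a b c k))" by (intro summable_mult sT)
    qed simp
    then show ?thesis by simp
  qed
  have "(\<lambda>N. suminf (\<lambda>k. T a b c k * rr a N k)) \<longlonglongrightarrow> G"
  proof -
    have "eventually (\<lambda>N. P a b c N = suminf (\<lambda>k. T a b c k * rr a N k)) sequentially"
      using eventually_ge_at_top[of N1] by eventually_elim (simp add: sumeq)
    then show ?thesis using P_lim[OF lb lc] unfolding G_def by (rule tendsto_cong[THEN iffD1])
  qed
  with tan have "suminf (T a b c) = G" using LIMSEQ_unique by blast
  moreover have "summable (T a b c)" using sT by (rule summable_norm_cancel)
  ultimately show ?thesis unfolding G_def by (metis summable_sums)
qed



lemma poch_shift: "x \<noteq> 0 \<Longrightarrow> pochhammer (x+1) n = pochhammer x n * (x + of_nat n) / (x::complex)"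
proof -
  assume x: "x \<noteq> 0"
  have "x * pochhammer (x+1) n = pochhammer x n * (x + of_nat n)"
    by (metis pochhammer_rec pochhammer_Suc)
  then show ?thesis using x by (simp add: field_simps)
qed

lemma genU: fixes A :: complex
  assumes "x \<noteq> 0" "p \<noteq> 0" "q \<noteq> 0" "PX \<noteq> 0" "PP \<noteq> 0" "PQ \<noteq> 0" "E \<noteq> 0" "G \<noteq> 0" "F \<noteq> 0"
    "x1 = PX * (x + m) / x" "p1 = PP * (p + m) / p" "q1 = PQ * (q + m) / q" "a = 2 * x" "a = p + q"
  shows "A * (x1 * (q1 * (p1 * (B * C)))) / (PX * (PP * (PQ * (E * G))) * F) * S
       = (a + 2 * m) / a * (A * B * C / (E * G * F) * S) * (1 + m * (m + a) / (p * q))"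
proof -
  have e1: "(a + 2 * m) / a = (x + m) / x" using assms(1,13) by (simp add: field_simps)
  have e2: "1 + m * (m + a) / (p * q) = (p + m) * (q + m) / (p * q)"
    using assms(2,3,14) by (simp add: field_simps)
  show ?thesis unfolding e1 e2 assms(10-12) using assms(1-9) by (simp add: field_simps)
qed

theorem mainTheorem5:
  fixes f a1 p d2 h k :: complex
  assumes conv: "Re (f - 2*a1 - 2*d2 - 2) > -1"
    and lower: "(f - 1)/2 \<notin> \<int>\<^sub>\<le>\<^sub>0" "p \<notin> \<int>\<^sub>\<le>\<^sub>0" "f - p - 1 \<notin> \<int>\<^sub>\<le>\<^sub>0"
               "f - a1 \<notin> \<int>\<^sub>\<le>\<^sub>0" "f - d2 \<notin> \<int>\<^sub>\<le>\<^sub>0"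
    and a1: "a1 \<noteq> 0"
    and h_def: "h = p * (f - p - 1) / a1"
    and dh: "d2 \<noteq> h"
    and k_def: "k = h * (1 + d2 + a1 - f) / (d2 - h)"
    and k: "k \<notin> \<int>\<^sub>\<le>\<^sub>0"
  shows "hypergeom [f - 1, (f + 1)/2, f - p, p + 1, a1, d2]
                   [(f - 1)/2, p, f - p - 1, f - a1, f - d2] (-1)
         = Gamma (f - a1) * Gamma (f - d2) / (Gamma f * Gamma (f - a1 - d2 - 1))
           * (Gamma k / Gamma (k + 1))"
proof -
  define a where "a = f - 1"
  define q where "q = f - p - 1"
  define x where "x = (f - 1) / 2"
  have x0: "x \<noteq> 0" using lower(1) unfolding x_def by (metis zero_in_nonpos_Ints)
  have a0: "a \<noteq> 0" using x0 unfolding a_def x_def by simp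
  have p0: "p \<noteq> 0" using lower(2) by (metis zero_in_nonpos_Ints)
  have q0: "q \<noteq> 0" using lower(3) unfolding q_def by (metis zero_in_nonpos_Ints)
  have lb: "1 + a - a1 \<notin> \<int>\<^sub>\<le>\<^sub>0" using lower(4) unfolding a_def by simp
  have lc: "1 + a - d2 \<notin> \<int>\<^sub>\<le>\<^sub>0" using lower(5) unfolding a_def by simp
  have cv: "Re (a - 2*a1 - 2*d2) > 0" using conv unfolding a_def by simp
  define G where "G = Gamma (f - a1) * Gamma (f - d2) * rGamma f * rGamma (f - a1 - d2)"
  have TG: "T a a1 d2 sums G"
    using F43[OF a0 lb lc] cv unfolding G_def a_def by simp
  have X0: "X4 a a1 d2 \<longlonglongrightarrow> 0" using X4_lim[OF lb lc cv] .
  have tel: "(\<lambda>n. X4 a a1 d2 (Suc n) - X4 a a1 d2 n) sums (0 - X4 a a1 d2 0)"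
    by (rule telescope_sums[OF X0])
  have X00: "X4 a a1 d2 0 = 0" unfolding X4_def by simp
  define u where "u n = prod_list (map (\<lambda>a. pochhammer a n) [f - 1, (f + 1)/2, f - p, p + 1, a1, d2]) /
            (prod_list (map (\<lambda>b. pochhammer b n) [(f - 1)/2, p, f - p - 1, f - a1, f - d2]) * fact n) * (-1) ^ n" for n
  have u_eq: "u n = (1 - a1*d2/(p*q)) * T a a1 d2 n + (-1/(a*p*q)) * (X4 a a1 d2 (Suc n) - X4 a a1 d2 n)" for n
  proof -
    have Tn: "T a a1 d2 n = (a + 2 * of_nat n) / a * (pochhammer (f-1) n * pochhammer a1 n * pochhammer d2 n /
        (pochhammer (f-a1) n * pochhammer (f-d2) n * fact n) * (-1)^n)"
      unfolding T_def W_def a_def by simp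
    have pz: "pochhammer z n \<noteq> 0" if "z \<notin> \<int>\<^sub>\<le>\<^sub>0" for z :: complex
      using that by (auto simp: pochhammer_eq_0_iff)
    have "u n = (a + 2 * of_nat n) / a * (pochhammer (f-1) n * pochhammer a1 n * pochhammer d2 n /
        (pochhammer (f-a1) n * pochhammer (f-d2) n * fact n) * (-1)^n) * (1 + of_nat n * (of_nat n + a) / (p * q))"
      unfolding u_def list.map prod_list.Cons prod_list.Nil mult_1_right
    proof (rule genU[OF x0 p0 q0 pz[OF lower(1)] pz[OF lower(2)] pz[OF lower(3)] pz[OF lower(4)] pz[OF lower(5)] fact_nonzero])
      show "pochhammer ((f + 1) / 2) n = pochhammer ((f - 1) / 2) n * (x + of_nat n) / x"
        using poch_shift[OF x0, of n] unfolding x_def by (simp add: field_simps)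
      show "pochhammer (p + 1) n = pochhammer p n * (p + of_nat n) / p" by (rule poch_shift[OF p0])
      show "pochhammer (f - p) n = pochhammer (f - p - 1) n * (q + of_nat n) / q"
        using poch_shift[OF q0, of n] unfolding q_def by simp
      show "a = 2 * x" unfolding a_def x_def by simp
      show "a = p + q" unfolding a_def q_def by simp
    qed
    also have "\<dots> = T a a1 d2 n * (1 + of_nat n * (of_nat n + a) / (p * q))" unfolding Tn ..
    also have "\<dots> = (1 - a1*d2/(p*q)) * T a a1 d2 n + (-1/(a*p*q)) * (- a * (T a a1 d2 n * (of_nat n * (of_nat n + a) + a1 * d2)))"
      using a0 p0 q0 by (simp add: field_simps)
    also have "- a * (T a a1 d2 n * (of_nat n * (of_nat n + a) + a1 * d2)) = X4 a a1 d2 (Suc n) - X4 a a1 d2 n"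
      by (rule X4_diff[OF a0 lb lc, symmetric])
    finally show ?thesis .
  qed
  have "u sums ((1 - a1*d2/(p*q)) * G + (-1/(a*p*q)) * (0 - X4 a a1 d2 0))"
    unfolding u_eq by (intro sums_add sums_mult TG tel)
  then have hs: "u sums ((1 - a1*d2/(p*q)) * G)" unfolding X00 by simp
  have hyp: "hypergeom [f - 1, (f + 1)/2, f - p, p + 1, a1, d2]
                   [(f - 1)/2, p, f - p - 1, f - a1, f - d2] (-1) = (1 - a1*d2/(p*q)) * G"
    unfolding hypergeom_def using sums_unique[OF hs] unfolding u_def by simp
  have k0: "k \<noteq> 0" using k by (metis zero_in_nonpos_Ints)
  have h0: "h \<noteq> 0" unfolding h_def using p0 q0 a1 unfolding q_def by simp
  have e0: "1 + d2 + a1 - f \<noteq> 0" using k0 unfolding k_def by auto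
  have Gk: "Gamma k / Gamma (k + 1) = 1 / k"
    using Gamma_plus1[OF k] Gamma_eq_zero_iff[of k] k k0 by (simp add: field_simps)
  have rG: "rGamma (f - a1 - d2 - 1) = (f - a1 - d2 - 1) * rGamma (f - a1 - d2)"
    using rGamma_plus1[of "f - a1 - d2 - 1"] by simp
  have "Gamma (f - a1) * Gamma (f - d2) / (Gamma f * Gamma (f - a1 - d2 - 1)) * (Gamma k / Gamma (k + 1))
      = G * ((f - a1 - d2 - 1) / k)"
    unfolding Gk G_def by (simp add: divide_inverse Gamma_def rG ac_simps)
  also have "(f - a1 - d2 - 1) / k = 1 - a1*d2/(p*q)"
  proof -
    define e where "e = 1 + d2 + a1 - f"
    have fe: "f - a1 - d2 - 1 = - e" unfolding e_def by simp
    have ke: "k = h * e / (d2 - h)" unfolding k_def e_def ..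
    have dh0: "d2 - h \<noteq> 0" using dh by simp
    have e0': "e \<noteq> 0" using e0 unfolding e_def .
    have "(- e) / (h * e / (d2 - h)) = (h - d2) / h" using h0 dh0 e0' by (simp add: field_simps)
    then have "(f - a1 - d2 - 1) / k = (h - d2) / h" unfolding fe ke .
    also have "\<dots> = 1 - a1*d2/(p*q)" unfolding h_def q_def[symmetric] using a1 p0 q0 by (simp add: field_simps)
    finally show ?thesis .
  qed
  finally have R: "Gamma (f - a1) * Gamma (f - d2) / (Gamma f * Gamma (f - a1 - d2 - 1)) * (Gamma k / Gamma (k + 1))
      = G * (1 - a1*d2/(p*q))" .
  show ?thesis unfolding hyp R by (rule mult.commute)
qed


end
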